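(* Let $H=(V,\mathcal E)$ be a hypergraph with maximum degree $\Delta$ in which every hyperedge has at most $k$ vertices. Let $B\subseteq\mathcal E$ be a set of hyperedges inducing a connected subgraph of $\mathrm L^2(H)$, and let $e^*\in B$. Then there exists a $\{2,3\}$-tree $T\subseteq B$ in $\mathrm{Lin}(H)$ with $e^*\in T$ and $|T|\ge\frac{|B|}{k\Delta}$.
   Context: $\mathrm{Lin}(H)$ is the line graph of $H$: its vertices are the hyperedges of $H$, two distinct hyperedges adjacent iff they share a vertex. $\mathrm L^2(H)$ is the graph on the hyperedges of $H$ in which two hyperedges are adjacent iff their distance in $\mathrm{Lin}(H)$ is at most $2$. For a graph $G$, a set $T$ of its vertices is a $\{2,3\}$-tree if (1) $\mathrm{dist}_G(u,w)\ge 2$ for all distinct $u,w\in T$, and (2) the graph on $T$ joining $u,w$ whenever $\mathrm{dist}_G(u,w)\in\{2,3\}$ is connected. *)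

theory Defs
  imports Complex_Main
begin

definition hypergraph :: "'a set \<Rightarrow> 'a set set \<Rightarrow> bool" where
  "hypergraph V E \<longleftrightarrow> finite V \<and> (\<forall>e\<in>E. e \<subseteq> V)"

definition hdegree :: "'a set set \<Rightarrow> 'a \<Rightarrow> nat" where
  "hdegree E v = card {e\<in>E. v \<in> e}"

definition max_degree :: "'a set \<Rightarrow> 'a set set \<Rightarrow> nat" where
  "max_degree V E = Max ({hdegree E v | v. v \<in> V} \<union> {0})"

definition lin_adj :: "'a set set \<Rightarrow> 'a set \<Rightarrow> 'a set \<Rightarrow> bool" where
  "lin_adj E e f \<longleftrightarrow> e \<in> E \<and> f \<in> E \<and> e \<noteq> f \<and> e \<inter> f \<noteq> {}"

definition lin_dist_le :: "'a set set \<Rightarrow> nat \<Rightarrow> 'a set \<Rightarrow> 'a set \<Rightarrow> bool" where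
  "lin_dist_le E n e f \<longleftrightarrow> (\<exists>m\<le>n. (e, f) \<in> {(x, y). lin_adj E x y} ^^ m)"

definition L2_adj :: "'a set set \<Rightarrow> 'a set \<Rightarrow> 'a set \<Rightarrow> bool" where
  "L2_adj E e f \<longleftrightarrow> e \<in> E \<and> f \<in> E \<and> e \<noteq> f \<and> lin_dist_le E 2 e f"

definition induced_connected :: "('b \<Rightarrow> 'b \<Rightarrow> bool) \<Rightarrow> 'b set \<Rightarrow> bool" where
  "induced_connected adj S \<longleftrightarrow>
     (\<forall>u\<in>S. \<forall>v\<in>S. (u, v) \<in> {(x, y). x \<in> S \<and> y \<in> S \<and> adj x y}\<^sup>*)"

definition tree23 :: "'a set set \<Rightarrow> 'a set set \<Rightarrow> bool" where
  "tree23 E T \<longleftrightarrow> T \<subseteq> E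
     \<and> (\<forall>u\<in>T. \<forall>w\<in>T. u \<noteq> w \<longrightarrow> \<not> lin_dist_le E 1 u w)
     \<and> induced_connected
         (\<lambda>u w. u \<noteq> w \<and> lin_dist_le E 3 u w \<and> \<not> lin_dist_le E 1 u w) T"

end

theory Submission
  imports Defs
begin

lemma relpow_sym_adj:
  "(x, y) \<in> {(x, y). lin_adj E x y} ^^ n \<Longrightarrow> (y, x) \<in> {(x, y). lin_adj E x y} ^^ n"
proof (induction n arbitrary: x)
  case 0 then show ?case by simp
next
  case (Suc n)
  then obtain z where xz: "(x, z) \<in> {(x, y). lin_adj E x y}" and zy: "(z, y) \<in> {(x, y). lin_adj E x y} ^^ n"
    using relpow_Suc_D2 by metis
  have "(y, z) \<in> {(x, y). lin_adj E x y} ^^ n" using Suc.IH zy by blast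
  moreover have "(z, x) \<in> {(x, y). lin_adj E x y}" using xz by (auto simp: lin_adj_def)
  ultimately show ?case by (rule relpow_Suc_I)
qed

lemma dist_sym: "lin_dist_le E n u w \<Longrightarrow> lin_dist_le E n w u"
  unfolding lin_dist_le_def using relpow_sym_adj by blast

lemma dist_trans: "lin_dist_le E a x y \<Longrightarrow> lin_dist_le E b y z \<Longrightarrow> lin_dist_le E (a + b) x z"
  unfolding lin_dist_le_def
proof -
  assume "\<exists>m\<le>a. (x, y) \<in> {(x, y). lin_adj E x y} ^^ m" "\<exists>m\<le>b. (y, z) \<in> {(x, y). lin_adj E x y} ^^ m"
  then obtain m1 m2 where "m1 \<le> a" "m2 \<le> b" "(x, y) \<in> {(x, y). lin_adj E x y} ^^ m1"
     "(y, z) \<in> {(x, y). lin_adj E x y} ^^ m2" by blast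
  then show "\<exists>m\<le>a + b. (x, z) \<in> {(x, y). lin_adj E x y} ^^ m"
    by (intro exI[of _ "m1 + m2"]) (auto simp: relpow_add)
qed

lemma d1_iff: "lin_dist_le E 1 u w \<longleftrightarrow> u = w \<or> lin_adj E u w"
proof
  assume "lin_dist_le E 1 u w"
  then obtain m where "m \<le> 1" "(u, w) \<in> {(x, y). lin_adj E x y} ^^ m" unfolding lin_dist_le_def by blast
  moreover have "m = 0 \<or> m = 1" using \<open>m \<le> 1\<close> by linarith
  ultimately show "u = w \<or> lin_adj E u w" by auto
next
  assume "u = w \<or> lin_adj E u w"
  then show "lin_dist_le E 1 u w" unfolding lin_dist_le_def
  proof
    assume "u = w" then show "\<exists>m\<le>1. (u, w) \<in> {(x, y). lin_adj E x y} ^^ m"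
      by (intro exI[of _ 0]) auto
  next
    assume "lin_adj E u w" then show "\<exists>m\<le>1. (u, w) \<in> {(x, y). lin_adj E x y} ^^ m"
      by (intro exI[of _ 1]) auto
  qed
qed

lemma d1_iff': "lin_dist_le E (Suc 0) u w \<longleftrightarrow> u = w \<or> lin_adj E u w"
  using d1_iff[of E u w] by (simp only: One_nat_def)

lemma nbhd_card:
  assumes hg: "hypergraph V E" and D: "\<Delta> = max_degree V E" and K: "\<forall>e\<in>E. card e \<le> k"
    and tE: "t \<in> E" and pos: "k * \<Delta> \<ge> 1"
  shows "card {f\<in>E. lin_dist_le E 1 f t} \<le> k * \<Delta>"
proof (cases "t = {}")
  case True
  have "{f\<in>E. lin_dist_le E 1 f t} \<subseteq> {t}" using True unfolding d1_iff by (auto simp: lin_adj_def)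
  then have "card {f\<in>E. lin_dist_le E 1 f t} \<le> card {t}" by (intro card_mono) auto
  then have "card {f\<in>E. lin_dist_le E 1 f t} \<le> 1" by simp
  then show ?thesis using pos by linarith
next
  case False
  have finV: "finite V" and sub: "\<forall>e\<in>E. e \<subseteq> V" using hg by (auto simp: hypergraph_def)
  have finE: "finite E" using finV sub by (meson finite_Pow_iff finite_subset PowI subsetI)
  have tV: "t \<subseteq> V" using sub tE by blast
  have fint: "finite t" using tV finV finite_subset by blast
  have "{f\<in>E. lin_dist_le E 1 f t} \<subseteq> (\<Union>v\<in>t. {e\<in>E. v \<in> e})"
    using False tE unfolding d1_iff by (auto simp: lin_adj_def)
  then have "card {f\<in>E. lin_dist_le E 1 f t} \<le> card (\<Union>v\<in>t. {e\<in>E. v \<in> e})"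
    using fint finE by (intro card_mono) auto
  also have "\<dots> \<le> (\<Sum>v\<in>t. card {e\<in>E. v \<in> e})" using fint by (rule card_UN_le)
  also have "\<dots> \<le> (\<Sum>v\<in>t. \<Delta>)"
  proof (rule sum_mono)
    fix v assume "v \<in> t"
    then have "v \<in> V" using tV by blast
    have "finite ({hdegree E v | v. v \<in> V} \<union> {0})" using finV by simp
    then have "hdegree E v \<le> max_degree V E" unfolding max_degree_def
      using \<open>v \<in> V\<close> by (intro Max_ge) auto
    then show "card {e\<in>E. v \<in> e} \<le> \<Delta>" using D by (simp add: hdegree_def)
  qed
  also have "\<dots> = card t * \<Delta>" by simp
  also have "\<dots> \<le> k * \<Delta>" using K tE by simp
  finally show ?thesis .
qed

theorem lemma4p5:
  fixes V :: "'a set" and E :: "'a set set" and k \<Delta> :: nat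
    and B :: "'a set set" and e0 :: "'a set"
  assumes "hypergraph V E"
    and "\<Delta> = max_degree V E"
    and "\<forall>e\<in>E. card e \<le> k"
    and "B \<subseteq> E"
    and "induced_connected (L2_adj E) B"
    and "e0 \<in> B"
  shows "\<exists>T. tree23 E T \<and> T \<subseteq> B \<and> e0 \<in> T
             \<and> real (card T) \<ge> real (card B) / (real k * real \<Delta>)"
proof -
  note hg = assms(1) and D = assms(2) and K = assms(3) and BE = assms(4)
    and conn = assms(5) and e0B = assms(6)
  have finV: "finite V" and sub: "\<forall>e\<in>E. e \<subseteq> V" using hg by (auto simp: hypergraph_def)
  have finE: "finite E" using finV sub by (meson finite_Pow_iff finite_subset PowI subsetI)
  have finB: "finite B" using BE finE finite_subset by blast
  define C where "C = {T. T \<subseteq> B \<and> e0 \<in> T \<and> tree23 E T}"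
  have finC: "finite C" unfolding C_def using finB by (auto intro: finite_subset[of _ "Pow B"])
  have "{e0} \<in> C" unfolding C_def tree23_def induced_connected_def using e0B BE by auto
  then have neC: "card ` C \<noteq> {}" by blast
  obtain T where TC: "T \<in> C" and Tmax: "\<forall>T'\<in>C. card T' \<le> card T"
  proof -
    have "Max (card ` C) \<in> card ` C" using finC neC by (intro Max_in) auto
    then obtain T where "T \<in> C" "card T = Max (card ` C)" by auto
    moreover have "\<forall>T'\<in>C. card T' \<le> Max (card ` C)" using finC by auto
    ultimately show ?thesis using that by auto
  qed
  have TB: "T \<subseteq> B" and e0T: "e0 \<in> T" and tT: "tree23 E T" using TC by (auto simp: C_def)
  have finT: "finite T" using TB finB finite_subset by blast
  define adj where "adj = (\<lambda>u w. u \<noteq> w \<and> lin_dist_le E 3 u w \<and> \<not> lin_dist_le E 1 u w)"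
  have adj_sym: "adj u w \<Longrightarrow> adj w u" for u w unfolding adj_def using dist_sym by blast
  define dom where "dom = (\<lambda>f. \<exists>t\<in>T. lin_dist_le E 1 f t)"
  have extend: "dom z" if yd: "dom y" and L: "L2_adj E y z" and zB: "z \<in> B" for y z
  proof (rule ccontr)
    assume nd: "\<not> dom z"
    obtain t where tT': "t \<in> T" and yt: "lin_dist_le E 1 y t" using yd dom_def by blast
    have zy: "lin_dist_le E 2 z y" using L dist_sym by (auto simp: L2_adj_def)
    have zt3: "lin_dist_le E 3 z t" using dist_trans[OF zy yt] by simp
    have zt1: "\<not> lin_dist_le E 1 z t" using nd tT' dom_def by blast
    have zt: "z \<noteq> t" using zt1 unfolding d1_iff by blast
    have azt: "adj z t" using zt zt3 zt1 adj_def by blast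
    have atz: "adj t z" using adj_sym[OF azt] .
    have znT: "z \<notin> T" using nd dom_def d1_iff by blast
    define T' where "T' = insert z T"
    have "tree23 E T'"
      unfolding tree23_def adj_def[symmetric]
    proof (intro conjI)
      show "T' \<subseteq> E" using T'_def tT zB BE by (auto simp: tree23_def)
      show "\<forall>u\<in>T'. \<forall>w\<in>T'. u \<noteq> w \<longrightarrow> \<not> lin_dist_le E 1 u w"
      proof (intro ballI impI)
        fix u w assume uT: "u \<in> T'" and wT: "w \<in> T'" and uw: "u \<noteq> w"
        have pT: "\<forall>u\<in>T. \<forall>w\<in>T. u \<noteq> w \<longrightarrow> \<not> lin_dist_le E 1 u w"
          using tT unfolding tree23_def by blast
        have nz: "\<forall>x\<in>T. \<not> lin_dist_le E 1 z x" using nd unfolding dom_def by blast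
        show "\<not> lin_dist_le E 1 u w"
        proof (cases "u = z")
          case True
          then have "w \<in> T" using wT uw T'_def by auto
          then show ?thesis using nz True by simp
        next
          case False
          then have uT': "u \<in> T" using uT T'_def by auto
          show ?thesis
          proof (cases "w = z")
            case True
            show ?thesis
            proof
              assume "lin_dist_le E 1 u w"
              then have "lin_dist_le E 1 z u" using True dist_sym by metis
              then show False using nz uT' by blast
            qed
          next
            case False
            then have "w \<in> T" using wT T'_def by auto
            then show ?thesis using pT uT' uw by blast
          qed
        qed
      qed
      let ?R = "{(x, y). x \<in> T' \<and> y \<in> T' \<and> adj x y}"
      let ?RT = "{(x, y). x \<in> T \<and> y \<in> T \<and> adj x y}"
      have mono: "?RT\<^sup>* \<subseteq> ?R\<^sup>*" by (rule rtrancl_mono) (auto simp: T'_def)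
      have cT: "\<forall>u\<in>T. \<forall>v\<in>T. (u, v) \<in> ?RT\<^sup>*" using tT unfolding tree23_def induced_connected_def adj_def by simp
      have to_t: "(u, t) \<in> ?R\<^sup>*" if "u \<in> T'" for u
      proof (cases "u = z")
        case True then show ?thesis using azt tT' by (auto simp: T'_def)
      next
        case False then have "u \<in> T" using that T'_def by auto
        then show ?thesis using cT tT' mono by blast
      qed
      have from_t: "(t, u) \<in> ?R\<^sup>*" if "u \<in> T'" for u
      proof (cases "u = z")
        case True then show ?thesis using atz tT' by (auto simp: T'_def)
      next
        case False then have "u \<in> T" using that T'_def by auto
        then show ?thesis using cT tT' mono by blast
      qed
      show "induced_connected adj T'"
        unfolding induced_connected_def using to_t from_t by (meson rtrancl_trans)
    qed
    then have "T' \<in> C" using C_def T'_def TB zB e0T by auto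
    then have "card T' \<le> card T" using Tmax by blast
    moreover have "card T' = card T + 1" using T'_def finT znT by simp
    ultimately show False by simp
  qed
  have alldom: "\<forall>f\<in>B. dom f"
  proof
    fix f assume fB: "f \<in> B"
    let ?S = "{(x, y). x \<in> B \<and> y \<in> B \<and> L2_adj E x y}"
    have "(e0, f) \<in> ?S\<^sup>*" using conn e0B fB unfolding induced_connected_def by blast
    then show "dom f"
    proof (induction rule: rtrancl_induct)
      case base then show ?case using e0T dom_def d1_iff by blast
    next
      case (step y z) then show ?case using extend by blast
    qed
  qed
  show ?thesis
  proof (intro exI conjI)
    show "tree23 E T" "T \<subseteq> B" "e0 \<in> T" by fact+
    show "real (card B) / (real k * real \<Delta>) \<le> real (card T)"
    proof (cases "k * \<Delta> = 0")
      case True then have "real k * real \<Delta> = 0" by auto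
      then show ?thesis by (metis division_ring_divide_zero of_nat_0_le_iff)
    next
      case False
      have "B \<subseteq> (\<Union>t\<in>T. {f\<in>E. lin_dist_le E 1 f t})" using alldom BE dom_def by blast
      then have "card B \<le> card (\<Union>t\<in>T. {f\<in>E. lin_dist_le E 1 f t})"
        using finT finE by (intro card_mono) auto
      also have "\<dots> \<le> (\<Sum>t\<in>T. card {f\<in>E. lin_dist_le E 1 f t})" using finT by (rule card_UN_le)
      also have "\<dots> \<le> (\<Sum>t\<in>T. k * \<Delta>)"
        using nbhd_card[OF hg D K] False TB BE by (intro sum_mono) auto
      also have "\<dots> = card T * (k * \<Delta>)" by simp
      finally have "real (card B) \<le> real (card T) * (real k * real \<Delta>)"
        by (metis of_nat_le_iff of_nat_mult)
      moreover have "real k * real \<Delta> > 0" using False by simp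
      ultimately show ?thesis by (simp add: divide_le_eq)
    qed
  qed
qed

end
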